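(* Consider a trial-offer market with social influence in which product $i$ is permanently displayed at a position of visibility $v_i>0$, with initial appeals $A_i>0$ and qualities $q_i\in[0,1]$ ($1\le i\le n$). Write $\hat q_i=v_iq_i$ and suppose there is $1\le j<n$ and numbers $\hat q^+>\hat q^-\ge 0$ with $\hat q_1=\cdots=\hat q_j=\hat q^+$ and $\hat q_{j+1}=\cdots=\hat q_n=\hat q^-$. Then almost surely the total market share of products $j+1,\dots,n$, namely $\frac{\sum_{i=j+1}^n d_{i,t}}{\sum_{i=1}^n d_{i,t}}$, converges to $0$ as $t\to\infty$.
   Context: Dynamic market: $d_{i,t}$ is the number of purchases of product $i$ before step $t$ ($d_{i,1}=0$), $a_{i,t}=A_i+d_{i,t}$. At step $t$ one participant tries product $i$ with probability $\frac{v_i a_{i,t}}{\sum_k v_k a_{k,t}}$, then purchases it with probability $q_i$ (independently); if purchased, $d_{i,t+1}=d_{i,t}+1$, all other counts unchanged. *)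

theory Defs
  imports "HOL-Probability.Probability"
begin

text \<open>A state is the purchase-count vector d :: nat => nat
  (only entries 1..n matter).  The randomness of the market is realised by an i.i.d.
  sequence of pairs (u_t, w_t) of independent uniform [0,1] variables: u_t selects the
  product that is tried (product i with probability v_i a_i / sum_k v_k a_k, by inverse
  CDF), and w_t < q_i decides the purchase (probability q_i, independent).\<close>

definition unit_unif :: "real measure" where
  "unit_unif = uniform_measure lborel {0..1}"

definition market_space :: "(real \<times> real) stream measure" where
  "market_space = stream_space (unit_unif \<Otimes>\<^sub>M unit_unif)"

definition try_prob :: "nat \<Rightarrow> (nat \<Rightarrow> real) \<Rightarrow> (nat \<Rightarrow> real) \<Rightarrow> (nat \<Rightarrow> nat) \<Rightarrow> nat \<Rightarrow> real" where
  "try_prob n v A d i = v i * (A i + real (d i)) / (\<Sum>k\<in>{1..n}. v k * (A k + real (d k)))"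

definition cum_prob :: "nat \<Rightarrow> (nat \<Rightarrow> real) \<Rightarrow> (nat \<Rightarrow> real) \<Rightarrow> (nat \<Rightarrow> nat) \<Rightarrow> nat \<Rightarrow> real" where
  "cum_prob n v A d i = (\<Sum>k\<in>{1..i}. try_prob n v A d k)"

text \<open>The product tried when the uniform sample is u (inverse CDF; the null event
  u >= 1 defaults to product n).\<close>
definition chosen :: "nat \<Rightarrow> (nat \<Rightarrow> real) \<Rightarrow> (nat \<Rightarrow> real) \<Rightarrow> (nat \<Rightarrow> nat) \<Rightarrow> real \<Rightarrow> nat" where
  "chosen n v A d u =
     (if \<exists>i\<in>{1..n}. u < cum_prob n v A d i
      then (LEAST i. i \<in> {1..n} \<and> u < cum_prob n v A d i) else n)"

definition market_step :: "nat \<Rightarrow> (nat \<Rightarrow> real) \<Rightarrow> (nat \<Rightarrow> real) \<Rightarrow> (nat \<Rightarrow> real)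
    \<Rightarrow> (nat \<Rightarrow> nat) \<Rightarrow> real \<times> real \<Rightarrow> (nat \<Rightarrow> nat)" where
  "market_step n v A q d uw =
     (let i = chosen n v A d (fst uw)
      in if snd uw < q i then d(i := Suc (d i)) else d)"

text \<open>purchases n v A q \<omega> t = the count vector before step t+1 (paper's d_{.,t+1});
  purchases ... 0 = 0 corresponds to d_{i,1} = 0.\<close>
primrec purchases :: "nat \<Rightarrow> (nat \<Rightarrow> real) \<Rightarrow> (nat \<Rightarrow> real) \<Rightarrow> (nat \<Rightarrow> real)
    \<Rightarrow> (real \<times> real) stream \<Rightarrow> nat \<Rightarrow> (nat \<Rightarrow> nat)" where
  "purchases n v A q \<omega> 0 = (\<lambda>i. 0)"
| "purchases n v A q \<omega> (Suc t) = market_step n v A q (purchases n v A q \<omega> t) (\<omega> !! t)"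

end

theory Submission
  imports Defs
begin

lemma sets_unit_unif[measurable_cong]: "sets unit_unif = sets borel"
  unfolding unit_unif_def by simp

lemma space_unit_unif[simp]: "space unit_unif = UNIV"
  unfolding unit_unif_def by simp

lemma prob_unit_unif: "prob_space unit_unif"
  unfolding unit_unif_def by (intro prob_space_uniform_measure) auto

definition "M0 = unit_unif \<Otimes>\<^sub>M unit_unif"

lemma sets_M0[measurable_cong]: "sets M0 = sets (borel \<Otimes>\<^sub>M borel)"
  unfolding M0_def by (intro sets_pair_measure_cong sets_unit_unif)

lemma space_M0[simp]: "space M0 = UNIV"
  unfolding M0_def by (simp add: space_pair_measure)

lemma prob_M0: "prob_space M0"
  unfolding M0_def by (intro prob_space_pair prob_unit_unif)

lemma market_space_eq: "market_space = stream_space M0"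
  unfolding market_space_def M0_def ..

locale mkt =
  fixes n j :: nat and v A q :: "nat \<Rightarrow> real" and qp qm :: real
  assumes j1: "1 \<le> j" and jn: "j < n"
    and vpos: "\<And>i. i \<in> {1..n} \<Longrightarrow> v i > 0"
    and Apos: "\<And>i. i \<in> {1..n} \<Longrightarrow> A i > 0"
    and q01: "\<And>i. i \<in> {1..n} \<Longrightarrow> 0 \<le> q i \<and> q i \<le> 1"
    and qpm: "qp > qm" and qm0: "qm \<ge> 0"
    and qtop: "\<And>i. i \<in> {1..j} \<Longrightarrow> v i * q i = qp"
    and qlow: "\<And>i. i \<in> {j+1..n} \<Longrightarrow> v i * q i = qm"
begin

abbreviation "S \<equiv> stream_space M0"

definition "step d x = market_step n v A q d x"

primrec proc :: "(nat \<Rightarrow> nat) \<Rightarrow> (real \<times> real) stream \<Rightarrow> nat \<Rightarrow> (nat \<Rightarrow> nat)" where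
  "proc d \<omega> 0 = d"
| "proc d \<omega> (Suc t) = step (proc d \<omega> t) (\<omega> !! t)"

definition "incr d i = d(i := Suc (d i))"
definition "nbr d = insert d (incr d ` {1..n})"

primrec reach :: "(nat \<Rightarrow> nat) \<Rightarrow> nat \<Rightarrow> (nat \<Rightarrow> nat) set" where
  "reach d 0 = {d}"
| "reach d (Suc t) = (\<Union>e\<in>reach d t. nbr e)"

lemma n1: "1 \<le> n" using j1 jn by simp

lemma chosen_range: "chosen n v A d u \<in> {1..n}"
proof (cases "\<exists>i\<in>{1..n}. u < cum_prob n v A d i")
  case True
  then obtain i where "i \<in> {1..n} \<and> u < cum_prob n v A d i" by auto
  then have "(LEAST i. i \<in> {1..n} \<and> u < cum_prob n v A d i) \<in> {1..n}"
    by (metis (mono_tags, lifting) LeastI)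
  then show ?thesis using True unfolding chosen_def by simp
next
  case False then show ?thesis unfolding chosen_def using n1 by simp
qed

lemma step_alt: "step d x = (let i = chosen n v A d (fst x) in if snd x < q i then incr d i else d)"
  unfolding step_def market_step_def incr_def ..

lemma step_nbr: "step d x \<in> nbr d"
  using chosen_range[of d "fst x"] unfolding step_alt nbr_def Let_def by auto

lemma finite_nbr: "finite (nbr d)" unfolding nbr_def by simp

lemma finite_reach: "finite (reach d t)"
  by (induction t) (auto simp: finite_nbr)

lemma proc_reach: "proc d \<omega> t \<in> reach d t"
proof (induction t)
  case (Suc t) then show ?case using step_nbr[of "proc d \<omega> t" "\<omega> !! t"] by (auto intro!: bexI[of _ "proc d \<omega> t"])
qed simp

lemma chosen_meas: "chosen n v A d \<in> measurable borel (count_space UNIV)"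
  unfolding chosen_def by measurable

lemma step_meas: "step d \<in> measurable M0 (count_space UNIV)"
proof -
  have "(\<lambda>x. (\<lambda>i x. if snd x < q i then incr d i else d) (chosen n v A d (fst x)) x) \<in> measurable M0 (count_space UNIV)"
  proof (rule measurable_compose_countable)
    show "(\<lambda>x. chosen n v A d (fst x)) \<in> measurable M0 (count_space UNIV)"
      using chosen_meas by measurable
  qed measurable
  then show ?thesis unfolding step_alt Let_def by (simp add: fun_eq_iff)
qed

lemma meas_restrict:
  assumes "countable I" "g \<in> measurable M (count_space UNIV)" "\<And>x. x \<in> space M \<Longrightarrow> g x \<in> I"
  shows "g \<in> measurable M (count_space I)"
  using assms measurable_sets[OF assms(2)] by (subst measurable_count_space_eq_countable) auto

lemma proc_meas: "(\<lambda>\<omega>. proc d \<omega> t) \<in> measurable S (count_space (reach d t))"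
proof (induction t)
  case 0
  then show ?case by simp
next
  case (Suc t)
  have "(\<lambda>\<omega>. (\<lambda>e \<omega>. step e (\<omega> !! t)) (proc d \<omega> t) \<omega>) \<in> measurable S (count_space (reach d (Suc t)))"
  proof (rule measurable_compose_countable'[OF _ Suc])
    fix e assume e: "e \<in> reach d t"
    show "(\<lambda>\<omega>. step e (\<omega> !! t)) \<in> measurable S (count_space (reach d (Suc t)))"
    proof (rule meas_restrict)
      show "countable (reach d (Suc t))" using finite_reach by (rule countable_finite)
      show "(\<lambda>\<omega>. step e (\<omega> !! t)) \<in> measurable S (count_space UNIV)"
        using step_meas[of e] by measurable
      show "step e (\<omega> !! t) \<in> reach d (Suc t)" for \<omega> using e step_nbr[of e "\<omega> !! t"] by (auto intro!: bexI[of _ e])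
    qed
  qed (rule countable_finite[OF finite_reach])
  then show ?case by simp
qed

lemma proc_meas_F:
  assumes "\<And>e. F e \<in> measurable S N"
  shows "(\<lambda>\<omega>. F (proc d \<omega> t) \<omega>) \<in> measurable S N"
  by (rule measurable_compose_countable'[OF assms proc_meas countable_finite[OF finite_reach]])

lemma proc_meas_P: "(\<lambda>\<omega>. P (proc d \<omega> t)) \<in> measurable S N"
  if "\<And>e. P e \<in> space N"
  using proc_meas_F[of "\<lambda>e \<omega>. P e"] that by simp

lemma proc_Stream: "proc d (x ## \<omega>) (Suc t) = proc (step d x) \<omega> t"
  by (induction t) auto

lemma proc_add: "proc d \<omega> (T + t) = proc (proc d \<omega> T) (sdrop T \<omega>) t"
  by (induction t) (auto simp: sdrop_snth)

end

context mkt begin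

definition "tot d = (\<Sum>k\<in>{1..n}. v k * (A k + real (d k)))"
abbreviation "tp d i \<equiv> try_prob n v A d i"
abbreviation "cum d i \<equiv> cum_prob n v A d i"

lemma tot_pos: "tot d > 0"
  unfolding tot_def using n1 vpos Apos
  by (intro sum_pos) (auto intro!: mult_pos_pos add_pos_nonneg)

lemma tp_pos: "i \<in> {1..n} \<Longrightarrow> tp d i > 0"
  unfolding try_prob_def using tot_pos[of d] vpos Apos
  by (auto simp: tot_def intro!: divide_pos_pos mult_pos_pos add_pos_nonneg)

lemma tp_alt: "tp d i = v i * (A i + real (d i)) / tot d"
  unfolding try_prob_def tot_def ..

lemma cum_0: "cum d 0 = 0" unfolding cum_prob_def by simp

lemma cum_Suc: "cum d (Suc i) = cum d i + tp d (Suc i)"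
  unfolding cum_prob_def by simp

lemma cum_n: "cum d n = 1"
  unfolding cum_prob_def tp_alt using tot_pos[of d]
  by (simp add: sum_divide_distrib[symmetric] tot_def)

lemma cum_mono: "a \<le> b \<Longrightarrow> b \<le> n \<Longrightarrow> cum d a \<le> cum d b"
  unfolding cum_prob_def
  by (rule sum_mono2) (auto intro: less_imp_le[OF tp_pos])

lemma cum_strict: "a < b \<Longrightarrow> b \<le> n \<Longrightarrow> cum d a < cum d b"
proof -
  assume ab: "a < b" "b \<le> n"
  have "cum d a \<le> cum d (b - 1)" using ab by (intro cum_mono) auto
  also have "\<dots> < cum d (Suc (b - 1))" unfolding cum_Suc using ab tp_pos[of "Suc (b-1)" d] by simp
  finally show ?thesis using ab by simp
qed

lemma cum_le1: "b \<le> n \<Longrightarrow> cum d b \<le> 1" using cum_mono[of b n d] cum_n by simp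
lemma cum_ge0: "b \<le> n \<Longrightarrow> 0 \<le> cum d b" using cum_mono[of 0 b d] cum_0 by simp

lemma chosen_iff:
  assumes u: "0 \<le> u" "u \<le> 1" and i: "i \<in> {1..n}"
  shows "chosen n v A d u = i \<longleftrightarrow> cum d (i - 1) \<le> u \<and> (u < cum d i \<or> i = n)"
proof (cases "u < 1")
  case True
  have ex: "\<exists>i\<in>{1..n}. u < cum d i" using True cum_n n1 by (intro bexI[of _ n]) auto
  define m where "m = (LEAST i. i \<in> {1..n} \<and> u < cum d i)"
  have ch: "chosen n v A d u = m" unfolding chosen_def m_def using ex by simp
  have m1: "m \<in> {1..n} \<and> u < cum d m" unfolding m_def using ex by (metis (mono_tags, lifting) LeastI)
  have m2: "\<And>k. k < m \<Longrightarrow> \<not> (k \<in> {1..n} \<and> u < cum d k)" unfolding m_def using not_less_Least by blast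
  show ?thesis
  proof
    assume "chosen n v A d u = i"
    then have mi: "m = i" using ch by simp
    have "cum d (i - 1) \<le> u"
    proof (cases "i - 1 = 0")
      case True then show ?thesis using cum_0 u by simp
    next
      case False then show ?thesis using m2[of "i - 1"] mi i by auto
    qed
    then show "cum d (i - 1) \<le> u \<and> (u < cum d i \<or> i = n)" using m1 mi by simp
  next
    assume H: "cum d (i - 1) \<le> u \<and> (u < cum d i \<or> i = n)"
    then have ui: "u < cum d i" using True cum_n by auto
    have "m \<le> i" unfolding m_def using i ui by (intro Least_le) auto
    moreover have "\<not> m < i"
    proof
      assume "m < i"
      then have "cum d m \<le> cum d (i - 1)" using i by (intro cum_mono) auto
      then show False using m1 H by simp
    qed
    ultimately show "chosen n v A d u = i" using ch by simp
  qed
next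
  case False
  then have u1: "u = 1" using u by simp
  have nex: "\<not> (\<exists>i\<in>{1..n}. u < cum d i)" using cum_le1 u1 by (auto simp: not_less)
  then have "chosen n v A d u = n" unfolding chosen_def by simp
  moreover have "i - 1 \<le> n" using i by auto
  then have "cum d (i - 1) \<le> u" using cum_le1[of "i - 1" d] u1 by simp
  moreover have "\<not> u < cum d i" using nex i by auto
  ultimately show ?thesis by auto
qed

lemma chosen_sets: "{u. chosen n v A d u = i} \<in> sets borel"
  using measurable_sets[OF chosen_meas[of d], of "{i}"] by (simp add: vimage_def)

lemma emeasure_uu: "B \<in> sets borel \<Longrightarrow> emeasure unit_unif B = emeasure lborel ({0..1} \<inter> B)"
  unfolding unit_unif_def by (subst emeasure_uniform_measure) (auto simp: divide_ennreal_def)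

lemma emeasure_chosen:
  assumes i: "i \<in> {1..n}"
  shows "emeasure unit_unif {u. chosen n v A d u = i} = ennreal (tp d i)"
proof -
  have tpi: "tp d i = cum d i - cum d (i - 1)" using cum_Suc[of d "i - 1"] i by simp
  have c0: "0 \<le> cum d (i - 1)" using i by (intro cum_ge0) auto
  show ?thesis
  proof (cases "i = n")
    case True
    have "{0..1} \<inter> {u. chosen n v A d u = i} = {cum d (i - 1)..1}"
    proof -
      have ch: "chosen n v A d u = i \<longleftrightarrow> cum d (i-1) \<le> u" if "0 \<le> u" "u \<le> 1" for u
        using chosen_iff[OF that i] True by simp
      have c0: "0 \<le> cum d (i - 1)" using i by (intro cum_ge0) auto
      show ?thesis
      proof (rule set_eqI)
        fix u
        show "u \<in> {0..1} \<inter> {u. chosen n v A d u = i} \<longleftrightarrow> u \<in> {cum d (i - 1)..1}"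
        proof (cases "0 \<le> u \<and> u \<le> 1")
          case True then show ?thesis using ch[of u] by simp
        next
          case False then show ?thesis using c0 by auto
        qed
      qed
    qed
    then show ?thesis using emeasure_uu[OF chosen_sets] tpi True cum_n cum_le1[of "i-1" d] by simp
  next
    case False
    have "{0..1} \<inter> {u. chosen n v A d u = i} = {cum d (i - 1)..<cum d i}"
    proof (rule set_eqI)
      fix u
      have c1: "cum d i \<le> 1" using i by (intro cum_le1) auto
      show "u \<in> {0..1} \<inter> {u. chosen n v A d u = i} \<longleftrightarrow> u \<in> {cum d (i - 1)..<cum d i}"
      proof (cases "0 \<le> u \<and> u \<le> 1")
        case True then show ?thesis using chosen_iff[of u i d] i False by simp
      next
        case False then show ?thesis using c0 c1 by auto
      qed
    qed
    then show ?thesis using emeasure_uu[OF chosen_sets] tpi cum_mono[of "i-1" i d] i by simp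
  qed
qed

lemma emeasure_lt: 
  assumes "0 \<le> c" "c \<le> 1" shows "emeasure unit_unif {w. w < c} = ennreal c"
proof -
  have "{0..1} \<inter> {w::real. w < c} = {0..<c}" using assms by auto
  then show ?thesis using emeasure_uu[of "{w. w < c}"] assms by simp
qed

definition "pp d i = tp d i * q i"

definition "B d i = {x. chosen n v A d (fst x) = i \<and> snd x < q i}"

lemma B_sets: "B d i \<in> sets M0"
proof -
  have "B d i = {u. chosen n v A d u = i} \<times> {w. w < q i}" unfolding B_def by auto
  then show ?thesis using chosen_sets unfolding M0_def by (simp add: sets_unit_unif)
qed

lemma emeasure_B: "i \<in> {1..n} \<Longrightarrow> emeasure M0 (B d i) = ennreal (pp d i)"
proof -
  assume i: "i \<in> {1..n}"
  have "B d i = {u. chosen n v A d u = i} \<times> {w. w < q i}" unfolding B_def by auto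
  moreover have "emeasure M0 ({u. chosen n v A d u = i} \<times> {w. w < q i}) =
     emeasure unit_unif {u. chosen n v A d u = i} * emeasure unit_unif {w. w < q i}"
    unfolding M0_def
    by (intro sigma_finite_measure.emeasure_pair_measure_Times prob_space_imp_sigma_finite prob_unit_unif)
       (auto simp: sets_unit_unif chosen_sets)
  moreover have "ennreal (tp d i) * ennreal (q i) = ennreal (tp d i * q i)"
    using q01[OF i] tp_pos[OF i, of d] by (intro ennreal_mult[symmetric]) auto
  ultimately show ?thesis using emeasure_chosen[OF i] emeasure_lt[of "q i"] q01[OF i]
    by (simp add: pp_def)
qed

end

context mkt begin

lemma pp_nonneg: "i \<in> {1..n} \<Longrightarrow> 0 \<le> pp d i"
  using tp_pos[of i d] q01[of i] by (auto simp: pp_def intro!: mult_nonneg_nonneg less_imp_le)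

lemma sum_pp_le1: "(\<Sum>i\<in>{1..n}. pp d i) \<le> 1"
proof -
  have "(\<Sum>i\<in>{1..n}. pp d i) \<le> (\<Sum>i\<in>{1..n}. tp d i)"
    unfolding pp_def using tp_pos q01
    by (intro sum_mono) (auto intro!: mult_left_le less_imp_le)
  also have "\<dots> = 1" using cum_n[of d] unfolding cum_prob_def .
  finally show ?thesis .
qed

definition "Bc d = space M0 - (\<Union>i\<in>{1..n}. B d i)"

lemma Bc_sets: "Bc d \<in> sets M0" unfolding Bc_def using B_sets by (intro sets.Diff sets.top sets.finite_UN) auto

lemma B_disj: "disjoint_family_on (B d) {1..n}"
  unfolding disjoint_family_on_def B_def by auto

lemma emeasure_Bc: "emeasure M0 (Bc d) = ennreal (1 - (\<Sum>i\<in>{1..n}. pp d i))"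
proof -
  interpret P: prob_space M0 by (rule prob_M0)
  have U: "(\<Union>i\<in>{1..n}. B d i) \<in> sets M0" using B_sets by auto
  have "emeasure M0 (\<Union>i\<in>{1..n}. B d i) = (\<Sum>i\<in>{1..n}. emeasure M0 (B d i))"
    using B_sets B_disj by (intro sum_emeasure[symmetric]) auto
  also have "\<dots> = (\<Sum>i\<in>{1..n}. ennreal (pp d i))" by (simp add: emeasure_B)
  also have "\<dots> = ennreal (\<Sum>i\<in>{1..n}. pp d i)" using pp_nonneg by (intro sum_ennreal) auto
  finally have e: "emeasure M0 (\<Union>i\<in>{1..n}. B d i) = ennreal (\<Sum>i\<in>{1..n}. pp d i)" .
  have "emeasure M0 (Bc d) = emeasure M0 (space M0) - emeasure M0 (\<Union>i\<in>{1..n}. B d i)"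
    unfolding Bc_def using U by (intro emeasure_compl) auto
  also have "\<dots> = ennreal 1 - ennreal (\<Sum>i\<in>{1..n}. pp d i)" using e P.emeasure_space_1 by simp
  also have "\<dots> = ennreal (1 - (\<Sum>i\<in>{1..n}. pp d i))"
    using pp_nonneg by (intro ennreal_minus) (auto intro: sum_nonneg)
  finally show ?thesis .
qed

lemma step_split:
  "ennreal (F (step d x)) = (\<Sum>i\<in>{1..n}. ennreal (F (incr d i)) * indicator (B d i) x) + ennreal (F d) * indicator (Bc d) x"
proof -
  define c where "c = chosen n v A d (fst x)"
  have c: "c \<in> {1..n}" unfolding c_def by (rule chosen_range)
  show ?thesis
  proof (cases "snd x < q c")
    case True
    have ind: "indicator (B d i) x = (if i = c then 1 else (0::ennreal))" for i
      using True c_def by (auto simp: indicator_def B_def)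
    have "x \<notin> Bc d" unfolding Bc_def using ind[of c] c by (auto simp: indicator_def split: if_splits)
    moreover have "step d x = incr d c" unfolding step_alt c_def[symmetric] Let_def using True by simp
    ultimately show ?thesis using c by (simp add: ind if_distrib cong: if_cong)
  next
    case False
    have ind: "indicator (B d i) x = (0::ennreal)" for i
      using False c_def by (auto simp: indicator_def B_def)
    have "x \<in> Bc d" unfolding Bc_def using ind by (auto simp: indicator_def split: if_splits)
    moreover have "step d x = d" unfolding step_alt c_def[symmetric] Let_def using False by simp
    ultimately show ?thesis by (simp add: ind)
  qed
qed

lemma one_step:
  assumes F: "\<And>e. F e \<ge> 0"
  shows "(\<integral>\<^sup>+x. ennreal (F (step d x)) \<partial>M0) =
     ennreal ((\<Sum>i\<in>{1..n}. pp d i * F (incr d i)) + (1 - (\<Sum>i\<in>{1..n}. pp d i)) * F d)"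
proof -
  have "(\<integral>\<^sup>+x. ennreal (F (step d x)) \<partial>M0) =
     (\<integral>\<^sup>+x. (\<Sum>i\<in>{1..n}. ennreal (F (incr d i)) * indicator (B d i) x) + ennreal (F d) * indicator (Bc d) x \<partial>M0)"
    by (simp add: step_split)
  also have "\<dots> = (\<integral>\<^sup>+x. (\<Sum>i\<in>{1..n}. ennreal (F (incr d i)) * indicator (B d i) x) \<partial>M0) + (\<integral>\<^sup>+x. ennreal (F d) * indicator (Bc d) x \<partial>M0)"
    using B_sets Bc_sets by (intro nn_integral_add borel_measurable_sum borel_measurable_times borel_measurable_const borel_measurable_indicator) auto
  also have "(\<integral>\<^sup>+x. (\<Sum>i\<in>{1..n}. ennreal (F (incr d i)) * indicator (B d i) x) \<partial>M0)
      = (\<Sum>i\<in>{1..n}. (\<integral>\<^sup>+x. ennreal (F (incr d i)) * indicator (B d i) x \<partial>M0))"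
    using B_sets by (intro nn_integral_sum) auto
  also have "\<dots> = (\<Sum>i\<in>{1..n}. ennreal (F (incr d i)) * ennreal (pp d i))"
    using B_sets by (intro sum.cong refl) (simp add: nn_integral_cmult_indicator emeasure_B)
  also have "\<dots> = (\<Sum>i\<in>{1..n}. ennreal (pp d i * F (incr d i)))"
    using F pp_nonneg by (intro sum.cong refl) (simp add: ennreal_mult'' mult.commute)
  also have "\<dots> = ennreal (\<Sum>i\<in>{1..n}. pp d i * F (incr d i))"
    using F pp_nonneg by (intro sum_ennreal) auto
  also have "(\<integral>\<^sup>+x. ennreal (F d) * indicator (Bc d) x \<partial>M0) = ennreal (F d) * ennreal (1 - (\<Sum>i\<in>{1..n}. pp d i))"
    using Bc_sets by (simp add: nn_integral_cmult_indicator emeasure_Bc)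
  also have "\<dots> = ennreal ((1 - (\<Sum>i\<in>{1..n}. pp d i)) * F d)"
    using F sum_pp_le1[of d] by (simp add: ennreal_mult'' mult.commute)
  finally have eq: "(\<integral>\<^sup>+x. ennreal (F (step d x)) \<partial>M0) = ennreal (\<Sum>i\<in>{1..n}. pp d i * F (incr d i)) + ennreal ((1 - (\<Sum>i\<in>{1..n}. pp d i)) * F d)" .
  have "0 \<le> (\<Sum>i\<in>{1..n}. pp d i * F (incr d i))" using F pp_nonneg by (intro sum_nonneg mult_nonneg_nonneg) auto
  moreover have "0 \<le> (1 - (\<Sum>i\<in>{1..n}. pp d i)) * F d" using F sum_pp_le1[of d] by simp
  ultimately show ?thesis unfolding eq by (rule ennreal_plus[symmetric])
qed

end

context mkt begin

definition "hh d = (\<Sum>i\<in>{1..j}. A i + real (d i))"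
definition "ll d = (\<Sum>i\<in>{j+1..n}. A i + real (d i))"

lemma hh_pos: "hh d > 0"
  unfolding hh_def using j1 jn Apos by (intro sum_pos) (auto intro: add_pos_nonneg)

lemma ll_pos: "ll d > 0"
  unfolding ll_def using j1 jn Apos by (intro sum_pos) (auto intro: add_pos_nonneg)

lemma split_n: "{1..n} = {1..j} \<union> {j+1..n}" using jn by auto

lemma sum_split: "(\<Sum>i\<in>{1..n}. f i) = (\<Sum>i\<in>{1..j}. f i) + (\<Sum>i\<in>{j+1..n}. f i)"
  unfolding split_n by (rule sum.union_disjoint) auto

lemma sum_pp_top: "(\<Sum>i\<in>{1..j}. pp d i) = qp * hh d / tot d"
proof -
  have "(\<Sum>i\<in>{1..j}. pp d i) = (\<Sum>i\<in>{1..j}. qp * (A i + real (d i)) / tot d)"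
    using qtop jn by (intro sum.cong refl) (auto simp: pp_def tp_alt)
  then show ?thesis by (simp add: hh_def sum_divide_distrib[symmetric] sum_distrib_left)
qed

lemma sum_pp_low: "(\<Sum>i\<in>{j+1..n}. pp d i) = qm * ll d / tot d"
proof -
  have "(\<Sum>i\<in>{j+1..n}. pp d i) = (\<Sum>i\<in>{j+1..n}. qm * (A i + real (d i)) / tot d)"
    using qlow j1 by (intro sum.cong refl) (auto simp: pp_def tp_alt)
  then show ?thesis by (simp add: ll_def sum_divide_distrib[symmetric] sum_distrib_left)
qed

lemma incr_top: "i \<in> {1..j} \<Longrightarrow> hh (incr d i) = hh d + 1 \<and> ll (incr d i) = ll d"
proof -
  assume i: "i \<in> {1..j}"
  have "hh (incr d i) = (\<Sum>k\<in>{1..j}. A k + real (d k) + (if k = i then 1 else 0))"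
    unfolding hh_def incr_def by (intro sum.cong refl) auto
  also have "\<dots> = hh d + 1" using i by (simp add: sum.distrib hh_def)
  finally show ?thesis using i unfolding ll_def incr_def by auto
qed

lemma incr_low: "i \<in> {j+1..n} \<Longrightarrow> ll (incr d i) = ll d + 1 \<and> hh (incr d i) = hh d"
proof -
  assume i: "i \<in> {j+1..n}"
  have "ll (incr d i) = (\<Sum>k\<in>{j+1..n}. A k + real (d k) + (if k = i then 1 else 0))"
    unfolding ll_def incr_def by (intro sum.cong refl) auto
  also have "\<dots> = ll d + 1" using i by (simp add: sum.distrib ll_def)
  finally show ?thesis using i unfolding hh_def incr_def by auto
qed

lemma drift:
  assumes t: "\<And>i. i \<in> {1..j} \<Longrightarrow> F (incr d i) = Ft"
    and l: "\<And>i. i \<in> {j+1..n} \<Longrightarrow> F (incr d i) = Fl"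
  shows "(\<Sum>i\<in>{1..n}. pp d i * F (incr d i)) + (1 - (\<Sum>i\<in>{1..n}. pp d i)) * F d
     = F d + qp * hh d / tot d * (Ft - F d) + qm * ll d / tot d * (Fl - F d)"
proof -
  have "(\<Sum>i\<in>{1..n}. pp d i * F (incr d i)) = (\<Sum>i\<in>{1..j}. pp d i) * Ft + (\<Sum>i\<in>{j+1..n}. pp d i) * Fl"
    unfolding sum_split using t l by (simp add: sum_distrib_right)
  moreover have "(\<Sum>i\<in>{1..n}. pp d i) = (\<Sum>i\<in>{1..j}. pp d i) + (\<Sum>i\<in>{j+1..n}. pp d i)"
    by (rule sum_split)
  ultimately show ?thesis unfolding sum_pp_top sum_pp_low using tot_pos[of d] by (simp add: field_simps)
qed

lemma hh_step: "hh (step d x) \<ge> hh d"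
proof -
  have "step d x \<in> nbr d" by (rule step_nbr)
  then consider "step d x = d" | i where "i \<in> {1..n}" "step d x = incr d i" unfolding nbr_def by auto
  then show ?thesis
  proof cases
    case (2 i)
    have "i \<in> {1..j} \<or> i \<in> {j+1..n}" using 2 by auto
    then show ?thesis using 2 incr_top[of i d] incr_low[of i d] by auto
  qed simp
qed

lemma tot_incr: "i \<in> {1..n} \<Longrightarrow> tot (incr d i) = tot d + v i"
proof -
  assume i: "i \<in> {1..n}"
  have "tot (incr d i) = (\<Sum>k\<in>{1..n}. v k * (A k + real (d k)) + (if k = i then v i else 0))"
    unfolding tot_def incr_def by (intro sum.cong refl) (auto simp: algebra_simps)
  also have "\<dots> = tot d + v i" using i by (simp add: sum.distrib tot_def)
  finally show ?thesis .
qed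

definition "vmax = Max (v ` {1..n})"

lemma vmax: "i \<in> {1..n} \<Longrightarrow> v i \<le> vmax" unfolding vmax_def by (intro Max_ge) auto
lemma vmax_pos: "vmax > 0" using vmax[of 1] vpos[of 1] n1 by auto

lemma tot_step: "tot (step d x) \<le> tot d + vmax"
proof -
  have "step d x \<in> nbr d" by (rule step_nbr)
  then consider "step d x = d" | i where "i \<in> {1..n}" "step d x = incr d i" unfolding nbr_def by auto
  then show ?thesis
  proof cases
    case (2 i) then show ?thesis using tot_incr vmax by auto
  qed (use vmax_pos in simp)
qed

lemma qp_pos: "qp > 0" using qpm qm0 by simp

lemma qph_le_tot: "qp * hh d \<le> tot d"
proof -
  have "qp * hh d = (\<Sum>i\<in>{1..j}. v i * q i * (A i + real (d i)))"
    unfolding hh_def sum_distrib_left using qtop by (intro sum.cong refl) auto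
  also have "\<dots> \<le> (\<Sum>i\<in>{1..j}. v i * (A i + real (d i)))"
  proof (rule sum_mono)
    fix i assume i: "i \<in> {1..j}"
    then have i': "i \<in> {1..n}" using jn by auto
    have "0 \<le> v i * (A i + real (d i))" using vpos[OF i'] Apos[OF i'] by simp
    then show "v i * q i * (A i + real (d i)) \<le> v i * (A i + real (d i))"
      using q01[OF i'] mult_right_le_one_le[of "v i * (A i + real (d i))" "q i"] by (simp add: mult_ac)
  qed
  also have "\<dots> \<le> tot d"
  proof -
    have "0 < (\<Sum>k\<in>{j+1..n}. v k * (A k + real (d k)))"
      using vpos Apos j1 jn by (intro sum_pos) (auto intro!: mult_pos_pos add_pos_nonneg)
    then show ?thesis unfolding tot_def sum_split by simp
  qed
  finally show ?thesis .
qed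

end

context mkt begin

lemma prob_S: "prob_space S" by (rule prob_space.prob_space_stream_space[OF prob_M0])

lemma space_S[simp]: "space S = UNIV" by (simp add: space_stream_space)

lemma pred_proc: "Measurable.pred S (\<lambda>\<omega>. Q (proc d \<omega> t))"
  by (rule proc_meas_P) simp

lemma sets_proc: "{\<omega>. Q (proc d \<omega> t)} \<in> sets S"
  using pred_proc[of Q d t] by (simp add: pred_def)

definition "\<beta> = (qp + qm) / (2 * qp)"
definition "hstar = 2 * qm / (qp - qm)"
definition "Z d = ll d / hh d powr \<beta>"

lemma beta: "0 \<le> \<beta>" "\<beta> \<le> 1" "\<beta> < 1"
  unfolding \<beta>_def using qp_pos qpm qm0 by (auto simp: field_simps)

lemma Z_nonneg: "Z d \<ge> 0" using ll_pos[of d] hh_pos[of d] unfolding Z_def by (intro divide_nonneg_nonneg) auto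

lemma Z_super:
  assumes h: "hh d \<ge> hstar"
  shows "(\<Sum>i\<in>{1..n}. pp d i * Z (incr d i)) + (1 - (\<Sum>i\<in>{1..n}. pp d i)) * Z d \<le> Z d"
proof -
  define h where "h = hh d"
  define l where "l = ll d"
  define T where "T = tot d"
  define r where "r = (h / (h + 1)) powr \<beta>"
  have hp: "h > 0" unfolding h_def by (rule hh_pos)
  have lp: "l > 0" unfolding l_def by (rule ll_pos)
  have Tp: "T > 0" unfolding T_def by (rule tot_pos)
  have hb: "h powr \<beta> > 0" using hp by simp
  have Ft: "Z (incr d i) = l * r / h powr \<beta>" if "i \<in> {1..j}" for i
    using incr_top[OF that, of d] hp unfolding Z_def r_def h_def l_def
    by (simp add: powr_divide)
  have Fl: "Z (incr d i) = (l + 1) / h powr \<beta>" if "i \<in> {j+1..n}" for i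
    using incr_low[OF that, of d] unfolding Z_def h_def l_def by simp
  have eq: "(\<Sum>i\<in>{1..n}. pp d i * Z (incr d i)) + (1 - (\<Sum>i\<in>{1..n}. pp d i)) * Z d
     = Z d + qp * h / T * (l * r / h powr \<beta> - Z d) + qm * l / T * ((l + 1) / h powr \<beta> - Z d)"
    unfolding h_def l_def T_def by (rule drift) (use Ft Fl in \<open>auto simp: h_def l_def\<close>)
  have Zd: "Z d = l / h powr \<beta>" unfolding Z_def h_def l_def ..
  have young: "r \<le> 1 - \<beta> / (h + 1)"
  proof -
    have "(h / (h + 1)) powr \<beta> * 1 powr (1 - \<beta>) \<le> \<beta> * (h / (h + 1)) + (1 - \<beta>) * 1"
      using beta hp by (intro Youngs_inequality_0) auto
    also have "\<dots> = 1 - \<beta> / (h + 1)" using hp by (simp add: field_simps)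
    finally show ?thesis unfolding r_def by simp
  qed
  have key: "qp * h * (r - 1) + qm \<le> 0"
  proof -
    have "qp * h * (r - 1) \<le> qp * h * (- \<beta> / (h + 1))"
      using young qp_pos hp by (intro mult_left_mono) auto
    also have "\<dots> = - ((qp * \<beta>) * h / (h + 1))" by (simp add: algebra_simps)
    also have "\<dots> = - ((qp + qm) / 2 * h / (h + 1))"
    proof -
      have "qp * \<beta> = (qp + qm) / 2" unfolding \<beta>_def using qp_pos by simp
      then show ?thesis by (simp only:)
    qed
    also have "\<dots> \<le> - qm"
    proof -
      have h1: "h + 1 > 0" using hp by simp
      have "h \<ge> 2 * qm / (qp - qm)" using h unfolding h_def hstar_def .
      then have "h * (qp - qm) \<ge> 2 * qm" using qpm by (simp add: field_simps)
      then have "(qp + qm) / 2 * h \<ge> qm * (h + 1)" by (simp add: algebra_simps)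
      then have "qm \<le> (qp + qm) / 2 * h / (h + 1)" by (rule pos_le_divide_eq[OF h1, THEN iffD2])
      then show ?thesis by simp
    qed
    finally show ?thesis by simp
  qed
  have "qp * h / T * (l * r / h powr \<beta> - Z d) + qm * l / T * ((l + 1) / h powr \<beta> - Z d)
      = l / (T * h powr \<beta>) * (qp * h * (r - 1) + qm)"
    unfolding Zd using hb Tp by (simp add: field_simps)
  also have "\<dots> \<le> 0" using key lp Tp hb by (intro mult_nonneg_nonpos) auto
  finally show ?thesis unfolding eq by simp
qed

lemma Z_super_int:
  assumes h: "hh d \<ge> hstar" and c: "c > 0"
  shows "(\<integral>\<^sup>+x. ennreal (Z (step d x) / c) \<partial>M0) \<le> ennreal (Z d / c)"
proof -
  have I: "(\<integral>\<^sup>+x. ennreal (Z (step d x) / c) \<partial>M0) =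
     ennreal ((\<Sum>i\<in>{1..n}. pp d i * (Z (incr d i) / c)) + (1 - (\<Sum>i\<in>{1..n}. pp d i)) * (Z d / c))"
    using one_step[of "\<lambda>e. Z e / c" d] Z_nonneg c by simp
  have X: "(\<Sum>i\<in>{1..n}. pp d i * (Z (incr d i) / c)) + (1 - (\<Sum>i\<in>{1..n}. pp d i)) * (Z d / c)
      = ((\<Sum>i\<in>{1..n}. pp d i * Z (incr d i)) + (1 - (\<Sum>i\<in>{1..n}. pp d i)) * Z d) / c"
    by (simp add: sum_divide_distrib add_divide_distrib)
  have Y: "((\<Sum>i\<in>{1..n}. pp d i * Z (incr d i)) + (1 - (\<Sum>i\<in>{1..n}. pp d i)) * Z d) / c \<le> Z d / c"
    using Z_super[OF h] c by (intro divide_right_mono) auto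
  show ?thesis unfolding I X by (rule ennreal_leI[OF Y])
qed

end

context mkt begin
lemma hh_proc: "hh (proc d \<omega> t) \<ge> hh d"
proof (induction t)
  case (Suc t) then show ?case using hh_step[of "proc d \<omega> t" "\<omega> !! t"] by simp
qed simp

lemma ville_N:
  assumes c: "c > 0"
  shows "hh d \<ge> hstar \<Longrightarrow> emeasure S {\<omega>. \<exists>t\<le>N. c \<le> Z (proc d \<omega> t)} \<le> ennreal (Z d / c)"
proof (induction N arbitrary: d)
  case 0
  interpret P: prob_space S by (rule prob_S)
  show ?case
  proof (cases "c \<le> Z d")
    case True
    then have "1 \<le> Z d / c" using c by simp
    then have B: "ennreal 1 \<le> ennreal (Z d / c)" by (rule ennreal_leI)
    have A: "emeasure S {\<omega>. \<exists>t\<le>0. c \<le> Z (proc d \<omega> t)} \<le> ennreal 1" using P.emeasure_le_1 by simp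
    show ?thesis by (rule order_trans[OF A B])
  next
    case False then show ?thesis by simp
  qed
next
  case (Suc N)
  interpret P: prob_space S by (rule prob_S)
  show ?case
  proof (cases "c \<le> Z d")
    case True
    then have "1 \<le> Z d / c" using c by simp
    then have B: "ennreal 1 \<le> ennreal (Z d / c)" by (rule ennreal_leI)
    have A: "emeasure S {\<omega>. \<exists>t\<le>Suc N. c \<le> Z (proc d \<omega> t)} \<le> ennreal 1" using P.emeasure_le_1 by simp
    show ?thesis by (rule order_trans[OF A B])
  next
    case False
    have meas: "{\<omega>. \<exists>t\<le>Suc N. c \<le> Z (proc d \<omega> t)} \<in> sets S"
    proof -
      have "{\<omega>. \<exists>t\<le>Suc N. c \<le> Z (proc d \<omega> t)} = (\<Union>t\<in>{..Suc N}. {\<omega>. c \<le> Z (proc d \<omega> t)})" by auto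
      then show ?thesis by (simp only:) (intro sets.finite_UN finite_atMost ballI sets_proc)
    qed
    have sl: "{\<omega>. \<exists>t\<le>Suc N. c \<le> Z (proc d (x ## \<omega>) t)} = {\<omega>. \<exists>t\<le>N. c \<le> Z (proc (step d x) \<omega> t)}" for x
    proof -
      have "(\<exists>t\<le>Suc N. c \<le> Z (proc d (x ## \<omega>) t)) \<longleftrightarrow> (\<exists>t\<le>N. c \<le> Z (proc (step d x) \<omega> t))" for \<omega>
      proof
        assume "\<exists>t\<le>Suc N. c \<le> Z (proc d (x ## \<omega>) t)"
        then obtain t where t: "t \<le> Suc N" "c \<le> Z (proc d (x ## \<omega>) t)" by auto
        then show "\<exists>t\<le>N. c \<le> Z (proc (step d x) \<omega> t)"
          using False by (cases t) (auto simp del: proc.simps(2) simp: proc_Stream)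
      next
        assume "\<exists>t\<le>N. c \<le> Z (proc (step d x) \<omega> t)"
        then obtain t where t: "t \<le> N" "c \<le> Z (proc (step d x) \<omega> t)" by auto
        then show "\<exists>t\<le>Suc N. c \<le> Z (proc d (x ## \<omega>) t)"
          by (intro exI[of _ "Suc t"]) (auto simp del: proc.simps(2) simp: proc_Stream)
      qed
      then show ?thesis by auto
    qed
    have "emeasure S {\<omega>. \<exists>t\<le>Suc N. c \<le> Z (proc d \<omega> t)} =
        (\<integral>\<^sup>+x. emeasure S {\<omega>. \<exists>t\<le>N. c \<le> Z (proc (step d x) \<omega> t)} \<partial>M0)"
      using prob_space.emeasure_stream_space[OF prob_M0 meas] by (simp add: sl)
    also have "\<dots> \<le> (\<integral>\<^sup>+x. ennreal (Z (step d x) / c) \<partial>M0)"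
      by (intro nn_integral_mono Suc.IH order_trans[OF Suc.prems hh_step])
    also have "\<dots> \<le> ennreal (Z d / c)" using Z_super_int[OF Suc.prems c] .
    finally show ?thesis .
  qed
qed

lemma ville:
  assumes c: "c > 0" and h: "hh d \<ge> hstar"
  shows "emeasure S {\<omega>. \<exists>t. c \<le> Z (proc d \<omega> t)} \<le> ennreal (Z d / c)"
proof -
  define E where "E N = {\<omega>. \<exists>t\<le>N. c \<le> Z (proc d \<omega> t)}" for N
  have sets: "E N \<in> sets S" for N
  proof -
    have "E N = (\<Union>t\<in>{..N}. {\<omega>. c \<le> Z (proc d \<omega> t)})" unfolding E_def by auto
    then show ?thesis by (simp only:) (intro sets.finite_UN finite_atMost ballI sets_proc)
  qed
  have inc: "incseq E"
  proof (rule incseq_SucI)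
    fix m show "E m \<subseteq> E (Suc m)" unfolding E_def by (auto intro: le_SucI)
  qed
  have U: "{\<omega>. \<exists>t. c \<le> Z (proc d \<omega> t)} = (\<Union>N. E N)" unfolding E_def by auto
  have "emeasure S (\<Union>N. E N) = (SUP N. emeasure S (E N))"
    using sets inc by (intro SUP_emeasure_incseq[symmetric]) auto
  also have "\<dots> \<le> ennreal (Z d / c)" unfolding E_def using ville_N[OF c h] by (intro SUP_least) auto
  finally show ?thesis unfolding U .
qed

lemma bounded_AE:
  assumes h: "hh d \<ge> hstar"
  shows "AE \<omega> in S. \<exists>C::nat. \<forall>t. Z (proc d \<omega> t) < real C"
proof (rule AE_I)
  define N where "N = {\<omega>. \<forall>C::nat. \<exists>t. real C \<le> Z (proc d \<omega> t)}"
  show "{\<omega> \<in> space S. \<not> (\<exists>C::nat. \<forall>t. Z (proc d \<omega> t) < real C)} \<subseteq> N"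
    unfolding N_def by (auto simp: not_less)
  have NC: "N \<subseteq> {\<omega>. \<exists>t. real C \<le> Z (proc d \<omega> t)}" for C unfolding N_def by auto
  show Ns: "N \<in> sets S"
  proof -
    have "N = (\<Inter>C. \<Union>t. {\<omega>. real C \<le> Z (proc d \<omega> t)})" unfolding N_def by auto
    then show ?thesis by (simp only:) (intro sets.countable_INT' sets.countable_UN' countableI_type sets_proc UNIV_not_empty subsetI; auto intro: sets_proc)
  qed
  have eps: "emeasure S N \<le> 0 + ennreal e" if e: "e > 0" for e
  proof -
    define C where "C = nat \<lceil>Z d / e\<rceil> + 1"
    have Cp: "real C > 0" unfolding C_def by simp
    have "Z d / e \<le> real C" unfolding C_def by linarith
    then have le: "Z d / real C \<le> e" using e Cp by (simp add: field_simps)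
    have sC: "{\<omega>. \<exists>t. real C \<le> Z (proc d \<omega> t)} \<in> sets S"
    proof -
      have "{\<omega>. \<exists>t. real C \<le> Z (proc d \<omega> t)} = (\<Union>t. {\<omega>. real C \<le> Z (proc d \<omega> t)})" by auto
      then show ?thesis by (simp only:) (intro sets.countable_UN' countableI_type subsetI; auto intro: sets_proc)
    qed
    have "emeasure S N \<le> emeasure S {\<omega>. \<exists>t. real C \<le> Z (proc d \<omega> t)}"
      using NC sC by (intro emeasure_mono) auto
    also have "\<dots> \<le> ennreal (Z d / real C)" using ville[OF Cp h] .
    also have "\<dots> \<le> ennreal e" using le by (rule ennreal_leI)
    finally show ?thesis by simp
  qed
  have "emeasure S N \<le> 0" by (rule ennreal_le_epsilon) (rule eps)
  then show "emeasure S N = 0" by simp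
qed

end

context mkt begin

lemma step_fun_meas: "(\<lambda>x. f (step d x)) \<in> measurable M0 N" if "\<And>e. f e \<in> space N"
  using measurable_compose[OF step_meas, of f N d] that by simp

definition "PR c s N = (\<Prod>t<N. (1 - c / (s + vmax * real t)))"

lemma PR_Suc: "PR c s (Suc N) = (1 - c / s) * PR c (s + vmax) N"
  unfolding PR_def prod.lessThan_Suc_shift by (simp add: algebra_simps)

lemma PR_nonneg: "0 \<le> c \<Longrightarrow> c \<le> s \<Longrightarrow> 0 \<le> PR c s N"
  unfolding PR_def
proof (intro prod_nonneg ballI)
  fix t assume c: "0 \<le> c" "c \<le> s"
  have "c \<le> s + vmax * real t" using c vmax_pos by (simp add: add_increasing2)
  then show "0 \<le> 1 - c / (s + vmax * real t)" using c by (cases "s + vmax * real t = 0") (auto simp: field_simps)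
qed

lemma nt_N:
  "tot d \<le> s \<Longrightarrow> emeasure S {\<omega>. \<forall>t\<le>N. hh (proc d \<omega> t) = hh d} \<le> ennreal (PR (qp * hh d) s N)"
proof (induction N arbitrary: d s)
  case 0
  interpret P: prob_space S by (rule prob_S)
  show ?case using P.emeasure_le_1 by (simp add: PR_def)
next
  case (Suc N)
  define c where "c = qp * hh d"
  have sp: "s > 0" using tot_pos[of d] Suc.prems by simp
  have cs: "c \<le> s" unfolding c_def using qph_le_tot[of d] Suc.prems by simp
  have c0: "0 \<le> c" unfolding c_def using qp_pos hh_pos[of d] by simp
  define K where "K = PR c (s + vmax) N"
  have K0: "0 \<le> K" unfolding K_def using cs c0 vmax_pos by (intro PR_nonneg) auto
  define G where "G e = (if hh e = hh d then 1 else (0::real))" for e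
  have meas: "{\<omega>. \<forall>t\<le>Suc N. hh (proc d \<omega> t) = hh d} \<in> sets S"
  proof -
    have "{\<omega>. \<forall>t\<le>Suc N. hh (proc d \<omega> t) = hh d} = (\<Inter>t\<in>{..Suc N}. {\<omega>. hh (proc d \<omega> t) = hh d})" by auto
    then show ?thesis by (simp only:) (intro sets.finite_INT finite_atMost ballI sets_proc; simp)
  qed
  have sl: "emeasure S {\<omega>. \<forall>t\<le>Suc N. hh (proc d (x ## \<omega>) t) = hh d} \<le> ennreal (G (step d x)) * ennreal K" for x
  proof (cases "hh (step d x) = hh d")
    case True
    have "{\<omega>. \<forall>t\<le>Suc N. hh (proc d (x ## \<omega>) t) = hh d} = {\<omega>. \<forall>t\<le>N. hh (proc (step d x) \<omega> t) = hh (step d x)}"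
    proof -
      have "(\<forall>t\<le>Suc N. hh (proc d (x ## \<omega>) t) = hh d) \<longleftrightarrow> (\<forall>t\<le>N. hh (proc (step d x) \<omega> t) = hh (step d x))" for \<omega>
      proof
        assume H: "\<forall>t\<le>Suc N. hh (proc d (x ## \<omega>) t) = hh d"
        show "\<forall>t\<le>N. hh (proc (step d x) \<omega> t) = hh (step d x)"
        proof (intro allI impI)
          fix t assume "t \<le> N"
          then have "hh (proc d (x ## \<omega>) (Suc t)) = hh d" using H by (simp del: proc.simps(2))
          then show "hh (proc (step d x) \<omega> t) = hh (step d x)" using True by (simp del: proc.simps(2) add: proc_Stream)
        qed
      next
        assume H: "\<forall>t\<le>N. hh (proc (step d x) \<omega> t) = hh (step d x)"
        show "\<forall>t\<le>Suc N. hh (proc d (x ## \<omega>) t) = hh d"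
        proof (intro allI impI)
          fix t assume t: "t \<le> Suc N"
          show "hh (proc d (x ## \<omega>) t) = hh d"
          proof (cases t)
            case (Suc t') then show ?thesis using H t True by (simp del: proc.simps(2) add: proc_Stream)
          qed simp
        qed
      qed
      then show ?thesis by auto
    qed
    moreover have "tot (step d x) \<le> s + vmax" using tot_step[of d x] Suc.prems by simp
    ultimately have "emeasure S {\<omega>. \<forall>t\<le>Suc N. hh (proc d (x ## \<omega>) t) = hh d} \<le> ennreal (PR (qp * hh (step d x)) (s + vmax) N)"
      using Suc.IH by simp
    then show ?thesis using True unfolding K_def G_def c_def by simp
  next
    case False
    have "{\<omega>. \<forall>t\<le>Suc N. hh (proc d (x ## \<omega>) t) = hh d} = {}"
    proof -
      have "hh (proc d (x ## \<omega>) (Suc 0)) \<noteq> hh d" for \<omega> using False by (simp del: proc.simps(2) add: proc_Stream)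
      then show ?thesis by (auto intro: exI[of _ "Suc 0"])
    qed
    then show ?thesis by (simp only: emeasure_empty) simp
  qed
  have "emeasure S {\<omega>. \<forall>t\<le>Suc N. hh (proc d \<omega> t) = hh d} =
      (\<integral>\<^sup>+x. emeasure S {\<omega>. \<forall>t\<le>Suc N. hh (proc d (x ## \<omega>) t) = hh d} \<partial>M0)"
    using prob_space.emeasure_stream_space[OF prob_M0 meas] by simp
  also have "\<dots> \<le> (\<integral>\<^sup>+x. ennreal (G (step d x)) * ennreal K \<partial>M0)"
    by (intro nn_integral_mono sl)
  also have "\<dots> = (\<integral>\<^sup>+x. ennreal (G (step d x)) \<partial>M0) * ennreal K"
    by (intro nn_integral_multc step_fun_meas) simp
  also have "(\<integral>\<^sup>+x. ennreal (G (step d x)) \<partial>M0) = ennreal (1 - qp * hh d / tot d)"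
  proof -
    have "(\<integral>\<^sup>+x. ennreal (G (step d x)) \<partial>M0) =
       ennreal ((\<Sum>i\<in>{1..n}. pp d i * G (incr d i)) + (1 - (\<Sum>i\<in>{1..n}. pp d i)) * G d)"
      by (rule one_step) (simp add: G_def)
    also have "(\<Sum>i\<in>{1..n}. pp d i * G (incr d i)) + (1 - (\<Sum>i\<in>{1..n}. pp d i)) * G d
        = G d + qp * hh d / tot d * (0 - G d) + qm * ll d / tot d * (1 - G d)"
      by (rule drift) (auto simp: G_def incr_top incr_low)
    finally show ?thesis by (simp add: G_def)
  qed
  also have "ennreal (1 - qp * hh d / tot d) * ennreal K = ennreal ((1 - qp * hh d / tot d) * K)"
    using K0 by (simp add: ennreal_mult'')
  also have "\<dots> \<le> ennreal ((1 - c / s) * K)"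
  proof (rule ennreal_leI, rule mult_right_mono[OF _ K0])
    have "c / s \<le> c / tot d" using c0 tot_pos[of d] Suc.prems by (intro divide_left_mono) auto
    then show "1 - qp * hh d / tot d \<le> 1 - c / s" unfolding c_def by simp
  qed
  also have "(1 - c / s) * K = PR (qp * hh d) s (Suc N)" unfolding K_def c_def PR_Suc ..
  finally show ?case .
qed

end

context mkt begin

lemma harm_alt: "harm N = (\<Sum>t<N. inverse (real (Suc t)))"
  by (induction N) (simp_all add: harm_Suc harm_def)

lemma PR_small:
  assumes c: "0 < c" "c \<le> s" and e: "e > 0"
  shows "\<exists>N. PR c s N \<le> e"
proof -
  define a where "a = c / (s + vmax)"
  have sp: "s > 0" using c by simp
  have ap: "a > 0" unfolding a_def using c vmax_pos by simp
  have bound: "PR c s N \<le> exp (- (a * ln (real N + 1)))" for N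
  proof -
    have "PR c s N \<le> (\<Prod>t<N. exp (- (c / (s + vmax * real t))))"
      unfolding PR_def
    proof (rule prod_mono)
      fix t assume "t \<in> {..<N}"
      have pos: "s + vmax * real t > 0" using sp vmax_pos by (simp add: add_pos_nonneg)
      have "c \<le> s + vmax * real t" using c vmax_pos by (simp add: add_increasing2)
      then have "0 \<le> 1 - c / (s + vmax * real t)" using pos by (simp add: field_simps)
      moreover have "1 - c / (s + vmax * real t) \<le> exp (- (c / (s + vmax * real t)))"
        using exp_ge_add_one_self[of "- (c / (s + vmax * real t))"] by simp
      ultimately show "0 \<le> 1 - c / (s + vmax * real t) \<and> 1 - c / (s + vmax * real t) \<le> exp (- (c / (s + vmax * real t)))" by simp
    qed
    also have "\<dots> = exp (- (\<Sum>t<N. c / (s + vmax * real t)))"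
      by (simp add: exp_sum[symmetric] sum_negf)
    also have "\<dots> \<le> exp (- (a * ln (real N + 1)))"
    proof -
      have "a * ln (real N + 1) \<le> a * harm N" using ap harm_ge_ln[of N] by (intro mult_left_mono) auto
      also have "\<dots> = (\<Sum>t<N. a * inverse (real (Suc t)))" unfolding harm_alt by (simp add: sum_distrib_left)
      also have "\<dots> \<le> (\<Sum>t<N. c / (s + vmax * real t))"
      proof (rule sum_mono)
        fix t assume "t \<in> {..<N}"
        have pos: "s + vmax * real t > 0" using sp vmax_pos by (simp add: add_pos_nonneg)
        have le: "s + vmax * real t \<le> (s + vmax) * (real t + 1)"
          using sp vmax_pos by (simp add: algebra_simps)
        have "a * inverse (real (Suc t)) = c / ((s + vmax) * (real t + 1))" unfolding a_def by (simp add: field_simps)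
        also have "\<dots> \<le> c / (s + vmax * real t)" using c pos le by (intro divide_left_mono) auto
        finally show "a * inverse (real (Suc t)) \<le> c / (s + vmax * real t)" .
      qed
      finally show ?thesis by simp
    qed
    finally show ?thesis .
  qed
  define N where "N = nat \<lceil>exp (- ln e / a)\<rceil>"
  have "exp (- ln e / a) \<le> real N + 1" unfolding N_def by linarith
  then have "ln (exp (- ln e / a)) \<le> ln (real N + 1)" by (subst ln_le_cancel_iff) auto
  then have "- ln e / a \<le> ln (real N + 1)" by simp
  then have "- ln e \<le> a * ln (real N + 1)" using ap by (simp add: field_simps)
  then have "exp (- (a * ln (real N + 1))) \<le> exp (ln e)" by simp
  then have "PR c s N \<le> e" using bound[of N] e by simp
  then show ?thesis ..
qed

lemma top_AE: "AE \<omega> in S. \<exists>t. hh (proc d \<omega> t) \<noteq> hh d"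
proof (rule AE_I)
  define N0 where "N0 = {\<omega>. \<forall>t. hh (proc d \<omega> t) = hh d}"
  show "{\<omega> \<in> space S. \<not> (\<exists>t. hh (proc d \<omega> t) \<noteq> hh d)} \<subseteq> N0" unfolding N0_def by auto
  show "N0 \<in> sets S"
  proof -
    have "N0 = (\<Inter>t. {\<omega>. hh (proc d \<omega> t) = hh d})" unfolding N0_def by auto
    then show ?thesis by (simp only:) (intro sets.countable_INT' countableI_type subsetI UNIV_not_empty; auto intro: sets_proc)
  qed
  have c: "0 < qp * hh d" "qp * hh d \<le> tot d" using qp_pos hh_pos[of d] qph_le_tot[of d] by auto
  have eps: "emeasure S N0 \<le> 0 + ennreal e" if e: "e > 0" for e
  proof -
    obtain N where N: "PR (qp * hh d) (tot d) N \<le> e" using PR_small[OF c e] by blast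
    have sN: "{\<omega>. \<forall>t\<le>N. hh (proc d \<omega> t) = hh d} \<in> sets S"
    proof -
      have "{\<omega>. \<forall>t\<le>N. hh (proc d \<omega> t) = hh d} = (\<Inter>t\<in>{..N}. {\<omega>. hh (proc d \<omega> t) = hh d})" by auto
      then show ?thesis by (simp only:) (intro sets.finite_INT finite_atMost ballI sets_proc; simp)
    qed
    have "emeasure S N0 \<le> emeasure S {\<omega>. \<forall>t\<le>N. hh (proc d \<omega> t) = hh d}"
      using sN unfolding N0_def by (intro emeasure_mono) auto
    also have "\<dots> \<le> ennreal (PR (qp * hh d) (tot d) N)" by (rule nt_N) simp
    also have "\<dots> \<le> ennreal e" using N by (rule ennreal_leI)
    finally show ?thesis by simp
  qed
  have "emeasure S N0 \<le> 0" by (rule ennreal_le_epsilon) (rule eps)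
  then show "emeasure S N0 = 0" by simp
qed

lemma AE_shift:
  assumes ae: "\<And>e. AE \<omega> in S. R e \<omega>" and meas: "\<And>e. Measurable.pred S (R e)"
  shows "AE \<omega> in S. R (proc d \<omega> T) (sdrop T \<omega>)"
proof (induction T arbitrary: d)
  case 0
  show ?case using ae[of d] by simp
next
  case (Suc T)
  have m: "Measurable.pred S (\<lambda>\<omega>. R (proc d \<omega> (Suc T)) (sdrop (Suc T) \<omega>))"
    by (rule proc_meas_F[of "\<lambda>e \<omega>. R e (sdrop (Suc T) \<omega>)"]) (use meas in measurable)
  show ?case
  proof (subst prob_space.AE_stream_space[OF prob_M0 m], rule AE_I2)
    fix x
    show "AE \<omega> in S. R (proc d (x ## \<omega>) (Suc T)) (sdrop (Suc T) (x ## \<omega>))"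
      using Suc.IH[of "step d x"] by (simp del: proc.simps(2) add: proc_Stream)
  qed
qed

end

context mkt begin

lemma purchases_proc: "purchases n v A q \<omega> t = proc (\<lambda>i. 0) \<omega> t"
  by (induction t) (simp_all add: step_def)

definition "kk e = (\<Sum>i\<in>{1..j}. e i)"
definition "hh0 = (\<Sum>i\<in>{1..j}. A i)"

lemma hh_eq: "hh e = hh0 + real (kk e)"
  unfolding hh_def hh0_def kk_def by (simp add: sum.distrib)

lemma hh0_pos: "hh0 > 0"
  unfolding hh0_def using j1 jn Apos by (intro sum_pos) auto

lemma det_part:
  fixes D :: "nat \<Rightarrow> nat \<Rightarrow> nat"
  assumes mono: "\<And>T t. hh (D T) \<le> hh (D (T + t))"
    and ch: "\<And>T. \<exists>t. hh (D (T + t)) \<noteq> hh (D T)"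
    and bd: "\<And>T. hstar \<le> hh (D T) \<Longrightarrow> \<exists>C::nat. \<forall>t. Z (D (T + t)) < real C"
  shows "(\<lambda>t. (\<Sum>i\<in>{j+1..n}. real (D t i)) / (\<Sum>i\<in>{1..n}. real (D t i))) \<longlonglongrightarrow> 0"
proof -
  have kmono: "kk (D T) \<le> kk (D (T + t))" for T t using mono[of T t] by (simp add: hh_eq)
  have kstep: "\<exists>t. kk (D (T + t)) \<ge> kk (D T) + 1" for T
  proof -
    obtain t where "hh (D (T + t)) \<noteq> hh (D T)" using ch by blast
    then have "kk (D (T + t)) \<noteq> kk (D T)" by (auto simp: hh_eq)
    then show ?thesis using kmono[of T t] by (intro exI[of _ t]) simp
  qed
  have kunb: "\<exists>T. kk (D T) \<ge> m" for m
  proof (induction m)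
    case (Suc m)
    then obtain T where "kk (D T) \<ge> m" by blast
    moreover obtain t where "kk (D (T + t)) \<ge> kk (D T) + 1" using kstep by blast
    ultimately show ?case by (intro exI[of _ "T + t"]) simp
  qed simp
  have kev: "\<exists>T. \<forall>t\<ge>T. kk (D t) \<ge> m" for m
  proof -
    obtain T where T: "kk (D T) \<ge> m" using kunb by blast
    have "kk (D t) \<ge> m" if "t \<ge> T" for t
      using T kmono[of T "t - T"] that by simp
    then show ?thesis by blast
  qed
  have hev: "\<exists>T. \<forall>t\<ge>T. hh (D t) \<ge> x" for x
  proof -
    obtain T where T: "\<forall>t\<ge>T. kk (D t) \<ge> nat \<lceil>x\<rceil>" using kev by blast
    have "hh (D t) \<ge> x" if "t \<ge> T" for t
    proof -
      have k: "nat \<lceil>x\<rceil> \<le> kk (D t)" using T that by blast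
      have "x \<le> real (nat \<lceil>x\<rceil>)" by (rule real_nat_ceiling_ge)
      also have "\<dots> \<le> real (kk (D t))" using k by simp
      finally have "real (kk (D t)) \<ge> x" .
      then show ?thesis using hh0_pos by (simp add: hh_eq)
    qed
    then show ?thesis by blast
  qed
  have hlim: "filterlim (\<lambda>t. hh (D t)) at_top sequentially"
    unfolding filterlim_at_top eventually_sequentially using hev by blast
  obtain T0 where T0: "hstar \<le> hh (D T0)" using hev by blast
  obtain C :: nat where C: "\<And>t. Z (D (T0 + t)) < real C" using bd[OF T0] by blast
  obtain T1 where T1: "\<And>t. t \<ge> T1 \<Longrightarrow> hh (D t) \<ge> 2 * hh0" using hev by blast
  define g where "g t = 2 * real C * hh (D t) powr (\<beta> - 1)" for t
  have glim: "g \<longlonglongrightarrow> 0"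
    unfolding g_def using beta(3) by (intro tendsto_mult_right_zero tendsto_neg_powr hlim) simp
  have r0: "0 \<le> (\<Sum>i\<in>{j+1..n}. real (D t i)) / (\<Sum>i\<in>{1..n}. real (D t i))" for t
    by (intro divide_nonneg_nonneg sum_nonneg) auto
  have rle: "(\<Sum>i\<in>{j+1..n}. real (D t i)) / (\<Sum>i\<in>{1..n}. real (D t i)) \<le> g t" if t: "t \<ge> max T0 T1" for t
  proof -
    define h where "h = hh (D t)"
    have hp: "h > 0" unfolding h_def by (rule hh_pos)
    have h2: "h \<ge> 2 * hh0" unfolding h_def using T1 t by simp
    have num: "(\<Sum>i\<in>{j+1..n}. real (D t i)) \<le> ll (D t)"
      unfolding ll_def using Apos j1 by (intro sum_mono) (auto intro: less_imp_le)
    have "Z (D t) < real C" using C[of "t - T0"] t by simp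
    then have llC: "ll (D t) \<le> real C * h powr \<beta>" unfolding Z_def h_def
      using hh_pos[of "D t"] by (simp add: divide_less_eq less_imp_le)
    have "real (kk (D t)) \<le> (\<Sum>i\<in>{1..n}. real (D t i))"
      unfolding kk_def of_nat_sum split_n using jn by (subst sum.union_disjoint) (auto intro: sum_nonneg)
    moreover have "real (kk (D t)) = h - hh0" unfolding h_def by (simp add: hh_eq)
    ultimately have den: "h / 2 \<le> (\<Sum>i\<in>{1..n}. real (D t i))" using h2 by simp
    have "(\<Sum>i\<in>{j+1..n}. real (D t i)) / (\<Sum>i\<in>{1..n}. real (D t i)) \<le> ll (D t) / (h / 2)"
      using num den hp ll_pos[of "D t"] by (intro frac_le) (auto intro: sum_nonneg)
    also have "\<dots> \<le> real C * h powr \<beta> / (h / 2)" using llC hp by (intro divide_right_mono) auto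
    also have "\<dots> = 2 * real C * (h powr \<beta> / h)" by simp
    also have "h powr \<beta> / h = h powr (\<beta> - 1)" using hp by (simp add: powr_diff)
    finally show ?thesis unfolding g_def h_def by simp
  qed
  show ?thesis
  proof (rule tendsto_sandwich[OF _ _ tendsto_const glim])
    show "\<forall>\<^sub>F t in sequentially. 0 \<le> (\<Sum>i\<in>{j+1..n}. real (D t i)) / (\<Sum>i\<in>{1..n}. real (D t i))"
      using r0 by simp
    show "\<forall>\<^sub>F t in sequentially. (\<Sum>i\<in>{j+1..n}. real (D t i)) / (\<Sum>i\<in>{1..n}. real (D t i)) \<le> g t"
      unfolding eventually_sequentially using rle by blast
  qed
qed

end

context mkt begin

lemma main_AE:
  "AE \<omega> in S. (\<lambda>t. (\<Sum>i\<in>{j+1..n}. real (proc (\<lambda>i. 0) \<omega> t i)) / (\<Sum>i\<in>{1..n}. real (proc (\<lambda>i. 0) \<omega> t i))) \<longlonglongrightarrow> 0"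
proof -
  define d0 :: "nat \<Rightarrow> nat" where "d0 = (\<lambda>i. 0)"
  have AE1: "AE \<omega> in S. \<forall>T. \<exists>t. hh (proc d0 \<omega> (T + t)) \<noteq> hh (proc d0 \<omega> T)"
  proof (unfold AE_all_countable, intro allI)
    fix T
    have m: "Measurable.pred S (\<lambda>\<omega>. \<exists>t. hh (proc e \<omega> t) \<noteq> hh e)" for e
      by (intro pred_intros_countable pred_proc)
    have "AE \<omega> in S. \<exists>t. hh (proc (proc d0 \<omega> T) (sdrop T \<omega>) t) \<noteq> hh (proc d0 \<omega> T)"
      by (rule AE_shift[where R = "\<lambda>e \<omega>. \<exists>t. hh (proc e \<omega> t) \<noteq> hh e"]) (rule top_AE, rule m)
    then show "AE \<omega> in S. \<exists>t. hh (proc d0 \<omega> (T + t)) \<noteq> hh (proc d0 \<omega> T)"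
      by (simp add: proc_add)
  qed
  have AE2: "AE \<omega> in S. \<forall>T. hstar \<le> hh (proc d0 \<omega> T) \<longrightarrow> (\<exists>C::nat. \<forall>t. Z (proc d0 \<omega> (T + t)) < real C)"
  proof (unfold AE_all_countable, intro allI)
    fix T
    define R where "R e \<omega> = (hstar \<le> hh e \<longrightarrow> (\<exists>C::nat. \<forall>t. Z (proc e \<omega> t) < real C))" for e \<omega>
    have m: "Measurable.pred S (R e)" for e
    proof (cases "hstar \<le> hh e")
      case True
      then have "R e = (\<lambda>\<omega>. \<exists>C::nat. \<forall>t. Z (proc e \<omega> t) < real C)" unfolding R_def by auto
      moreover have "Measurable.pred S (\<lambda>\<omega>. \<exists>C::nat. \<forall>t. Z (proc e \<omega> t) < real C)"
        by (intro pred_intros_countable pred_proc)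
      ultimately show ?thesis by simp
    next
      case False
      then have "R e = (\<lambda>\<omega>. True)" unfolding R_def by auto
      then show ?thesis by simp
    qed
    have ae: "AE \<omega> in S. R e \<omega>" for e
    proof (cases "hstar \<le> hh e")
      case True then show ?thesis unfolding R_def using bounded_AE[OF True] by simp
    next
      case False then show ?thesis unfolding R_def by simp
    qed
    have "AE \<omega> in S. R (proc d0 \<omega> T) (sdrop T \<omega>)" by (rule AE_shift[OF ae m])
    then show "AE \<omega> in S. hstar \<le> hh (proc d0 \<omega> T) \<longrightarrow> (\<exists>C::nat. \<forall>t. Z (proc d0 \<omega> (T + t)) < real C)"
      unfolding R_def by (simp add: proc_add)
  qed
  from AE1 AE2 show ?thesis
  proof eventually_elim
    case (elim \<omega>)
    have "(\<lambda>t. (\<Sum>i\<in>{j+1..n}. real (proc d0 \<omega> t i)) / (\<Sum>i\<in>{1..n}. real (proc d0 \<omega> t i))) \<longlonglongrightarrow> 0"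
    proof (rule det_part)
      show "hh (proc d0 \<omega> T) \<le> hh (proc d0 \<omega> (T + t))" for T t
        unfolding proc_add by (rule hh_proc)
      show "\<exists>t. hh (proc d0 \<omega> (T + t)) \<noteq> hh (proc d0 \<omega> T)" for T using elim(1) by blast
      show "\<exists>C::nat. \<forall>t. Z (proc d0 \<omega> (T + t)) < real C" if "hstar \<le> hh (proc d0 \<omega> T)" for T
        using elim(2) that by blast
    qed
    then show ?case unfolding d0_def .
  qed
qed

end

theorem mainTheorem6:
  fixes n j :: nat and v A q :: "nat \<Rightarrow> real" and qp qm :: real
  assumes "1 \<le> j" and "j < n"
    and "\<And>i. i \<in> {1..n} \<Longrightarrow> v i > 0"
    and "\<And>i. i \<in> {1..n} \<Longrightarrow> A i > 0"
    and "\<And>i. i \<in> {1..n} \<Longrightarrow> 0 \<le> q i \<and> q i \<le> 1"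
    and "qp > qm" and "qm \<ge> 0"
    and "\<And>i. i \<in> {1..j} \<Longrightarrow> v i * q i = qp"
    and "\<And>i. i \<in> {j+1..n} \<Longrightarrow> v i * q i = qm"
  shows "AE \<omega> in market_space.
           (\<lambda>t. (\<Sum>i\<in>{j+1..n}. real (purchases n v A q \<omega> t i))
                / (\<Sum>i\<in>{1..n}. real (purchases n v A q \<omega> t i))) \<longlonglongrightarrow> 0"
proof -
  interpret mkt n j v A q qp qm
    using assms by unfold_locales auto
  show ?thesis unfolding market_space_eq purchases_proc by (rule main_AE)
qed

end
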